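(* Let $K$ be an increasing sequence of positive integers such that $\{\mathfrak F^{-1}(K_n)\}$ is equidistributed. Then $K$ satisfies strong Benford's Law under $\mathcal F$-expansion, i.e. for every integer $s\ge2$ and $\mathbf b\in\mathcal F_s$, $$\lim_{n\to\infty}\frac{\#\{k\le n:\mathrm{LB}_s(K_k)=\mathbf b\}}{n}=\log_\phi\frac{\widetilde{\mathbf b}\cdot\widehat F}{\mathbf b\cdot\widehat F}.$$
   Context: $F$: $F_1=1,F_2=2,F_{n+2}=F_{n+1}+F_n$. Zeckendorf expansion $m=\sum_{k=1}^M\epsilon(k)F_{M-k+1}$ (unique, $\epsilon(k)\in\{0,1\}$, $\epsilon(1)=1$, $\epsilon(k)\epsilon(k+1)=0$); $\mathrm{LB}_s(m)=(\epsilon(1),\dots,\epsilon(s))$ if $M\ge s$. $\mathcal F_s$ ($s\ge2$): all $\mathrm{LB}_s(m)$, listed $\mathbf b_1,\dots,\mathbf b_\ell$ with $1+\mathbf b_k*F=\mathbf b_{k+1}*F$ where $\mathbf b*F=\sum_{k}\mathbf b(k)F_{s-k+1}$; $\mathbf b_{\ell+1}:=(1,0,1,0,\dots,1,0,1,1)$ if $s$ even, $(1,0,1,0,\dots,1,1,0)$ if $s$ odd; $\widetilde{\mathbf b_k}=\mathbf b_{k+1}$. $\omega=\phi^{-1}$ ($\phi$ golden ratio), $\mathbf b\cdot\widehat F=\sum_k\mathbf b(k)\omega^{k-1}$. $\mathfrak F(x)=\frac{\phi}{\sqrt5}(\phi^x+\phi^{-x}\cos(\pi x)\phi^{-2})$,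 increasing on $[1,\infty)$, inverse $\mathfrak F^{-1}$. A real sequence $(x_n)$ has $\{x_n\}$ equidistributed if $\lim_n\#\{k\le n:\{x_k\}\le\beta\}/n=\beta$ for all $\beta\in[0,1]$, $\{\cdot\}$ denoting fractional part. *)

theory Defs
  imports Complex_Main
begin

text \<open>Fibonacci numbers with F_1 = 1, F_2 = 2 (zF 0 = 1 is an unused auxiliary value).\<close>
fun zF :: "nat \<Rightarrow> nat" where
  "zF 0 = 1"
| "zF (Suc 0) = 1"
| "zF (Suc (Suc n)) = zF (Suc n) + zF n"

text \<open>eps is a Zeckendorf expansion of m; eps ! (k-1) is epsilon(k), M = length eps.\<close>
definition is_zeck :: "nat \<Rightarrow> nat list \<Rightarrow> bool" where
  "is_zeck m eps \<longleftrightarrow> eps \<noteq> [] \<and> hd eps = 1 \<and> set eps \<subseteq> {0, 1}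
     \<and> (\<forall>k. Suc k < length eps \<longrightarrow> eps ! k * eps ! (Suc k) = 0)
     \<and> m = (\<Sum>k<length eps. eps ! k * zF (length eps - k))"

definition zeck :: "nat \<Rightarrow> nat list" where
  "zeck m = (THE eps. is_zeck m eps)"

definition LB :: "nat \<Rightarrow> nat \<Rightarrow> nat list option" where
  "LB s m = (if 0 < m \<and> s \<le> length (zeck m) then Some (take s (zeck m)) else None)"

definition FS :: "nat \<Rightarrow> nat list set" where
  "FS s = {b. \<exists>m. LB s m = Some b}"

text \<open>b * F = sum_k b(k) F_{s-k+1}.\<close>
definition valF :: "nat \<Rightarrow> nat list \<Rightarrow> nat" where
  "valF s b = (\<Sum>k<s. b ! k * zF (s - k))"

text \<open>b_{l+1}: (1,0,...,1,0,1,1) for s even, (1,0,...,1,1,0) for s odd.\<close>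
definition last_block :: "nat \<Rightarrow> nat list" where
  "last_block s = map (\<lambda>i. if even s then (if odd i \<or> i = s then 1 else 0)
                               else (if (odd i \<and> i \<noteq> s) \<or> i = s - 1 then 1 else 0)) [1..<s+1]"

definition btilde :: "nat \<Rightarrow> nat list \<Rightarrow> nat list" where
  "btilde s b = (if \<exists>c\<in>FS s. valF s c = valF s b + 1
                 then (THE c. c \<in> FS s \<and> valF s c = valF s b + 1)
                 else last_block s)"

definition phi :: real where "phi = (1 + sqrt 5) / 2"
definition omega :: real where "omega = 1 / phi"

text \<open>b . F-hat = sum_k b(k) omega^(k-1).\<close>
definition dotw :: "nat list \<Rightarrow> real" where
  "dotw b = (\<Sum>k<length b. real (b ! k) * omega ^ k)"

definition frakF :: "real \<Rightarrow> real" where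
  "frakF x = phi / sqrt 5 * (phi powr x + phi powr (-x) * cos (pi * x) * phi powr (-2))"

definition frakF_inv :: "real \<Rightarrow> real" where
  "frakF_inv y = (THE x. 1 \<le> x \<and> frakF x = y)"

definition equidistributed_frac :: "(nat \<Rightarrow> real) \<Rightarrow> bool" where
  "equidistributed_frac x \<longleftrightarrow> (\<forall>\<beta>\<in>{0..1}.
     (\<lambda>n. real (card {k\<in>{1..n}. frac (x k) \<le> \<beta>}) / real n) \<longlonglongrightarrow> \<beta>)"

end

theory Submission
  imports Defs "HOL-Analysis.Complex_Transcendental"
begin


fun vl :: "nat list \<Rightarrow> bool" where
  "vl [] = True"
| "vl [d] = (d \<le> 1)"
| "vl (d # e # l) = (d \<le> 1 \<and> d * e = 0 \<and> vl (e # l))"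

fun fv :: "nat list \<Rightarrow> nat" where
  "fv [] = 0"
| "fv (d # l) = d * zF (Suc (length l)) + fv l"

lemma zF_Suc_pos: "zF n > 0"
  by (induction n rule: zF.induct) auto

lemma zF_mono_Suc: "zF n \<le> zF (Suc n)"
  by (cases n rule: zF.cases) auto

lemma zF_strict: "n \<ge> 1 \<Longrightarrow> zF n < zF (Suc n)"
  by (cases n rule: zF.cases) (auto simp: zF_Suc_pos)

lemma zF_mono: "m \<le> n \<Longrightarrow> zF m \<le> zF n"
  by (induction n) (auto simp: le_Suc_eq intro: order_trans[OF _ zF_mono_Suc])

lemma zF_strict_mono: "1 \<le> m \<Longrightarrow> m < n \<Longrightarrow> zF m < zF n"
proof (induction n)
  case (Suc n) thus ?case
    using zF_strict[of n] by (cases "m = n") (auto simp: less_Suc_eq)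
qed auto

lemma zF_ge: "zF n \<ge> n"
proof (induction n rule: zF.induct)
  case (3 n) thus ?case using zF_Suc_pos[of n] by auto
qed auto

lemma vl_Cons: "vl (d # l) \<longleftrightarrow> d \<le> 1 \<and> vl l \<and> (l \<noteq> [] \<longrightarrow> d * hd l = 0)"
  by (cases l) auto

lemma vl_append: "vl (b @ t) \<longleftrightarrow> vl b \<and> vl t \<and> (b \<noteq> [] \<and> t \<noteq> [] \<longrightarrow> last b * hd t = 0)"
  by (induction b) (auto simp: vl_Cons)

lemma vl_replicate: "vl (replicate n 0)"
  by (induction n) (auto simp: vl_Cons)

lemma fv_replicate[simp]: "fv (replicate n 0) = 0"
  by (induction n) auto

lemma fv_append: "fv (b @ t) = fv (b @ replicate (length t) 0) + fv t"
  by (induction b) auto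

lemma vl_set: "vl l \<Longrightarrow> x \<in> set l \<Longrightarrow> x \<le> 1"
  by (induction l rule: vl.induct) auto

lemma vl_iff: "vl l \<longleftrightarrow> set l \<subseteq> {0, 1} \<and> (\<forall>k. Suc k < length l \<longrightarrow> l ! k * l ! (Suc k) = 0)"
proof (induction l rule: vl.induct)
  case (3 d e l)
  show ?case
  proof
    assume h: "vl (d # e # l)"
    hence "set (d # e # l) \<subseteq> {0,1}" using vl_set by fastforce
    moreover have "\<forall>k. Suc k < length (d # e # l) \<longrightarrow> (d # e # l) ! k * (d # e # l) ! (Suc k) = 0"
    proof (intro allI impI)
      fix k assume "Suc k < length (d # e # l)"
      thus "(d # e # l) ! k * (d # e # l) ! (Suc k) = 0"
        using h 3 by (cases k) auto
    qed
    ultimately show "set (d # e # l) \<subseteq> {0, 1} \<and> (\<forall>k. Suc k < length (d # e # l) \<longrightarrow> (d # e # l) ! k * (d # e # l) ! Suc k = 0)" by blast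
  next
    assume h: "set (d # e # l) \<subseteq> {0, 1} \<and> (\<forall>k. Suc k < length (d # e # l) \<longrightarrow> (d # e # l) ! k * (d # e # l) ! Suc k = 0)"
    have "vl (e # l)" unfolding 3
    proof (intro conjI allI impI)
      show "set (e # l) \<subseteq> {0,1}" using h by auto
      fix k assume "Suc k < length (e # l)"
      thus "(e # l) ! k * (e # l) ! Suc k = 0" using h[THEN conjunct2, rule_format, of "Suc k"] by auto
    qed
    moreover have "d * e = 0" using h[THEN conjunct2, rule_format, of 0] by auto
    moreover have "d \<le> 1" using h by auto
    ultimately show "vl (d # e # l)" by simp
  qed
qed auto

lemma fv_sum: "fv l = (\<Sum>k<length l. l ! k * zF (length l - k))"
proof (induction l)
  case (Cons d l)
  have "(\<Sum>k<length (d # l). (d # l) ! k * zF (length (d # l) - k))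
      = d * zF (Suc (length l)) + (\<Sum>k<length l. l ! k * zF (length l - k))"
    by (simp add: sum.lessThan_Suc_shift del: sum.lessThan_Suc)
  thus ?case using Cons by simp
qed simp

lemma is_zeck_iff: "is_zeck m eps \<longleftrightarrow> vl eps \<and> eps \<noteq> [] \<and> hd eps = 1 \<and> m = fv eps"
  unfolding is_zeck_def vl_iff fv_sum by blast

lemma valF_fv: "length b = s \<Longrightarrow> valF s b = fv b"
  unfolding valF_def fv_sum by simp

lemma fv_upper: "vl t \<Longrightarrow> fv t < zF (Suc (length t))"
proof (induction "length t" arbitrary: t rule: less_induct)
  case less
  show ?case
  proof (cases t)
    case (Cons d l)
    show ?thesis
    proof (cases "d = 0")
      case True
      hence "fv l < zF (Suc (length l))" using less Cons by (auto simp: vl_Cons)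
      thus ?thesis using True Cons zF_mono_Suc[of "Suc (length l)"] by auto
    next
      case False
      hence d1: "d = 1" using less Cons by (auto simp: vl_Cons)
      show ?thesis
      proof (cases l)
        case Nil thus ?thesis using Cons d1 by simp
      next
        case (Cons e l')
        hence "e = 0" "vl l'" using less.prems \<open>t = d # l\<close> d1 by (auto simp: vl_Cons)
        moreover have "fv l' < zF (Suc (length l'))"
          using less.hyps[of l'] \<open>t = d # l\<close> Cons \<open>vl l'\<close> by auto
        ultimately show ?thesis using \<open>t = d # l\<close> Cons d1 by simp
      qed
    qed
  qed simp
qed

lemma fv_lower: "hd t = 1 \<Longrightarrow> t \<noteq> [] \<Longrightarrow> zF (length t) \<le> fv t"
  by (cases t) auto

lemma fv_rep: "r < zF (Suc n) \<Longrightarrow> \<exists>t. vl t \<and> length t = n \<and> fv t = r"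
proof (induction n arbitrary: r rule: less_induct)
  case (less n)
  show ?case
  proof (cases n)
    case 0 thus ?thesis using less by (intro exI[of _ "[]"]) auto
  next
    case (Suc n')
    show ?thesis
    proof (cases "r < zF n")
      case True
      then obtain t where "vl t" "length t = n'" "fv t = r" using less Suc by auto
      thus ?thesis using Suc by (intro exI[of _ "0 # t"]) (auto simp: vl_Cons)
    next
      case False
      show ?thesis
      proof (cases n')
        case 0
        hence "r = 1" using False less Suc by auto
        thus ?thesis using Suc 0 by (intro exI[of _ "[1]"]) auto
      next
        case (Suc n'')
        have "r - zF n < zF (Suc n'')" using less.prems False \<open>n = Suc n'\<close> Suc by auto
        then obtain t where "vl t" "length t = n''" "fv t = r - zF n"
          using less.IH[of n'' "r - zF n"] \<open>n = Suc n'\<close> Suc by auto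
        thus ?thesis using \<open>n = Suc n'\<close> Suc False
          by (intro exI[of _ "1 # 0 # t"]) (auto simp: vl_Cons)
      qed
    qed
  qed
qed

lemma fv_unique: "vl t \<Longrightarrow> vl t' \<Longrightarrow> length t = length t' \<Longrightarrow> fv t = fv t' \<Longrightarrow> t = t'"
proof (induction t arbitrary: t')
  case (Cons d l)
  then obtain d' l' where t': "t' = d' # l'" by (cases t') auto
  have vl: "vl l" "vl l'" "d \<le> 1" "d' \<le> 1" using Cons t' by (auto simp: vl_Cons)
  have len: "length l = length l'" using Cons t' by simp
  have "d = d'"
  proof (rule ccontr)
    assume "d \<noteq> d'"
    hence "d = 1 \<and> d' = 0 \<or> d = 0 \<and> d' = 1" using vl by auto
    thus False using fv_upper[OF vl(1)] fv_upper[OF vl(2)] Cons.prems(4) t' len by auto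
  qed
  thus ?case using Cons.IH[OF vl(1) vl(2) len] Cons.prems(4) t' len by simp
qed auto



lemma sqrt5_sq: "sqrt 5 * sqrt 5 = (5::real)" by simp
lemma sqrt5_bounds: "2 < sqrt (5::real)" "sqrt (5::real) < 3"
proof -
  have "sqrt 4 < sqrt (5::real)" by (subst real_sqrt_less_iff) simp
  moreover have "sqrt (4::real) = 2" by (simp add: real_sqrt_unique)
  ultimately show "2 < sqrt (5::real)" by simp
  have "sqrt 5 < sqrt (9::real)" by (subst real_sqrt_less_iff) simp
  moreover have "sqrt (9::real) = 3" by (simp add: real_sqrt_unique)
  ultimately show "sqrt (5::real) < 3" by simp
qed

lemma phi_sq: "phi * phi = phi + 1"
  unfolding phi_def by (simp add: field_simps)
lemma phi_gt1: "phi > 1" unfolding phi_def using sqrt5_bounds by simp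
lemma phi_pos: "phi > 0" using phi_gt1 by simp
lemma omega_eq: "omega = phi - 1"
  unfolding omega_def using phi_sq phi_pos by (simp add: field_simps)
lemma omega_phi: "omega * phi = 1" unfolding omega_def using phi_pos by simp
lemma omega_pos: "omega > 0" unfolding omega_def using phi_pos by simp
lemma omega_lt1: "omega < 1" unfolding omega_def using phi_gt1 by simp
lemma omega_sq: "omega * omega = 1 - omega"
  unfolding omega_eq using phi_sq by (simp add: algebra_simps)
lemma omega_pow_rec: "omega ^ n = omega ^ Suc n + omega ^ Suc (Suc n)"
proof -
  have "omega ^ Suc n + omega ^ Suc (Suc n) = omega ^ n * (omega + omega * omega)" by (simp add: algebra_simps)
  thus ?thesis using omega_sq by simp
qed
lemma one_plus_omega: "1 + omega = phi" using omega_eq by simp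



lemma is_zeck_len: "is_zeck m e \<Longrightarrow> zF (length e) \<le> m \<and> m < zF (Suc (length e)) \<and> length e \<ge> 1"
proof -
  assume "is_zeck m e"
  hence h: "vl e" "e \<noteq> []" "hd e = 1" "m = fv e" unfolding is_zeck_iff by auto
  show ?thesis using fv_lower[OF h(3) h(2)] fv_upper[OF h(1)] h(2) h(4) by (cases e) auto
qed

lemma is_zeck_unique: "is_zeck m e1 \<Longrightarrow> is_zeck m e2 \<Longrightarrow> e1 = e2"
proof -
  assume h1: "is_zeck m e1" and h2: "is_zeck m e2"
  have "length e1 = length e2"
  proof (rule ccontr)
    assume "length e1 \<noteq> length e2"
    hence "length e1 < length e2 \<or> length e2 < length e1" by auto
    thus False
    proof
      assume "length e1 < length e2"
      hence "zF (Suc (length e1)) \<le> zF (length e2)" by (intro zF_mono) auto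
      thus False using is_zeck_len[OF h1] is_zeck_len[OF h2] by auto
    next
      assume "length e2 < length e1"
      hence "zF (Suc (length e2)) \<le> zF (length e1)" by (intro zF_mono) auto
      thus False using is_zeck_len[OF h1] is_zeck_len[OF h2] by auto
    qed
  qed
  thus ?thesis using h1 h2 fv_unique unfolding is_zeck_iff by metis
qed

lemma zeck_exists: "0 < m \<Longrightarrow> \<exists>e. is_zeck m e"
proof -
  assume m: "0 < m"
  have ex: "\<exists>n. m < zF (Suc n)" using zF_ge[of "Suc m"] by (intro exI[of _ m]) auto
  define n where "n = (LEAST n. m < zF (Suc n))"
  have n1: "m < zF (Suc n)" unfolding n_def using LeastI_ex[OF ex] .
  have n0: "n \<noteq> 0" using n1 m by (cases "n = 0") auto
  then obtain n' where n': "n = Suc n'" by (cases n) auto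
  have "\<not> m < zF (Suc n')" using not_less_Least[of n' "\<lambda>n. m < zF (Suc n)"] n' unfolding n_def by auto
  hence n2: "zF n \<le> m" using n' by auto
  obtain t where t: "vl t" "length t = n" "fv t = m" using fv_rep[OF n1] by auto
  then obtain d l where dl: "t = d # l" using n0 by (cases t) auto
  have "d \<noteq> 0"
  proof
    assume "d = 0"
    hence "fv t = fv l" using dl by simp
    moreover have "fv l < zF n" using fv_upper[of l] t dl by (auto simp: vl_Cons)
    ultimately show False using t n2 by simp
  qed
  hence "d = 1" using t dl by (auto simp: vl_Cons)
  thus ?thesis using t dl unfolding is_zeck_iff by auto
qed

lemma zeck: "0 < m \<Longrightarrow> is_zeck m (zeck m)"
  unfolding zeck_def using zeck_exists is_zeck_unique by (metis theI)

lemma zeck_eq: "is_zeck m e \<Longrightarrow> zeck m = e"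
  using zeck is_zeck_unique is_zeck_iff is_zeck_len
  by (metis le_zero_eq not_gr_zero zF_Suc_pos)

lemma vl_take: "vl l \<Longrightarrow> vl (take s l)"
  using vl_append[of "take s l" "drop s l"] by simp

lemma vl_drop: "vl l \<Longrightarrow> vl (drop s l)"
  using vl_append[of "take s l" "drop s l"] by simp

lemma FS_props: "b \<in> FS s \<Longrightarrow> 1 \<le> s \<Longrightarrow> vl b \<and> b \<noteq> [] \<and> hd b = 1 \<and> length b = s"
proof -
  assume "b \<in> FS s" "1 \<le> s"
  then obtain m where "LB s m = Some b" unfolding FS_def by auto
  hence m: "0 < m" "s \<le> length (zeck m)" "b = take s (zeck m)"
    unfolding LB_def by (auto split: if_splits)
  have z: "is_zeck m (zeck m)" using zeck m by auto
  hence "vl b" using m vl_take unfolding is_zeck_iff by auto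
  moreover have "b \<noteq> []" "length b = s" using m \<open>1 \<le> s\<close> by auto
  moreover have "hd b = 1" using m z \<open>1 \<le> s\<close> unfolding is_zeck_iff
    by (cases "zeck m") (auto simp: take_Cons')
  ultimately show ?thesis by auto
qed

lemma FS_intro: "vl c \<Longrightarrow> c \<noteq> [] \<Longrightarrow> hd c = 1 \<Longrightarrow> length c = s \<Longrightarrow> c \<in> FS s \<and> LB s (fv c) = Some c"
proof -
  assume h: "vl c" "c \<noteq> []" "hd c = 1" "length c = s"
  hence z: "is_zeck (fv c) c" unfolding is_zeck_iff by auto
  hence "zeck (fv c) = c" by (rule zeck_eq)
  moreover have "0 < fv c" using is_zeck_len[OF z] zF_Suc_pos[of "length c"] by linarith
  ultimately have "LB s (fv c) = Some c" unfolding LB_def using h by auto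
  thus ?thesis unfolding FS_def by auto
qed

definition TT :: "nat list \<Rightarrow> nat \<Rightarrow> nat" where
  "TT b L = (if last b = 0 then zF (L - length b + 1) else zF (L - length b))"

lemma LB_char:
  assumes b: "vl b" "b \<noteq> []" "hd b = 1" "length b = s" and m: "0 < m"
  defines "L \<equiv> length (zeck m)"
  shows "LB s m = Some b \<longleftrightarrow>
     (s \<le> L \<and> fv (b @ replicate (L - s) 0) \<le> m \<and> m < fv (b @ replicate (L - s) 0) + TT b L)"
proof
  assume "LB s m = Some b"
  hence h: "s \<le> L" "take s (zeck m) = b" unfolding LB_def L_def by (auto split: if_splits)
  define t where "t = drop s (zeck m)"
  have zt: "zeck m = b @ t" using h t_def by (metis append_take_drop_id)
  have z: "is_zeck m (zeck m)" using zeck m by auto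
  hence vz: "vl (b @ t)" and mz: "m = fv (b @ t)" using zt unfolding is_zeck_iff by auto
  have lt: "length t = L - s" using h unfolding t_def L_def by simp
  have mt: "m = fv (b @ replicate (L - s) 0) + fv t" using mz fv_append lt by metis
  have vt: "vl t" and lh: "t \<noteq> [] \<longrightarrow> last b * hd t = 0" using vz b by (auto simp: vl_append)
  have "fv t < TT b L"
  proof (cases "last b = 0")
    case True thus ?thesis using fv_upper[OF vt] lt b(4) h unfolding TT_def by (simp add: Suc_diff_le)
  next
    case False
    show ?thesis
    proof (cases t)
      case Nil thus ?thesis using lt unfolding TT_def by (auto simp: zF_Suc_pos)
    next
      case (Cons e t')
      hence "e = 0" using lh False by auto
      hence "fv t = fv t'" using Cons by simp
      moreover have "fv t' < zF (Suc (length t'))" using vt Cons fv_upper by (auto simp: vl_Cons)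
      ultimately show ?thesis using False Cons lt b(4) unfolding TT_def by auto
    qed
  qed
  thus "s \<le> L \<and> fv (b @ replicate (L - s) 0) \<le> m \<and> m < fv (b @ replicate (L - s) 0) + TT b L"
    using h mt by auto
next
  assume h: "s \<le> L \<and> fv (b @ replicate (L - s) 0) \<le> m \<and> m < fv (b @ replicate (L - s) 0) + TT b L"
  define A where "A = fv (b @ replicate (L - s) 0)"
  define r where "r = m - A"
  have r: "r < TT b L" "m = A + r" using h unfolding r_def A_def by auto
  have lb01: "last b \<le> 1" using vl_set[OF b(1), of "last b"] b(2) by auto
  obtain t where t: "vl t" "length t = L - s" "fv t = r" "t \<noteq> [] \<longrightarrow> last b * hd t = 0"
  proof (cases "last b = 0")
    case True
    have "r < zF (Suc (L - s))" using r True h b(4) unfolding TT_def by (simp add: Suc_diff_le)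
    thus ?thesis using fv_rep that True by auto
  next
    case False
    show ?thesis
    proof (cases "L = s")
      case True
      hence "r = 0" using r False b(4) unfolding TT_def by auto
      thus ?thesis using that True by auto
    next
      case False2: False
      then obtain L' where L': "L - s = Suc L'" using h by (cases "L - s") auto
      have "r < zF (Suc L')" using r False b(4) L' unfolding TT_def by auto
      then obtain t' where "vl t'" "length t' = L'" "fv t' = r" using fv_rep by blast
      thus ?thesis using that[of "0 # t'"] L' by (auto simp: vl_Cons)
    qed
  qed
  have "is_zeck m (b @ t)" unfolding is_zeck_iff
    using t b r fv_append[of b t] unfolding A_def by (auto simp: vl_append)
  hence "zeck m = b @ t" by (rule zeck_eq)
  thus "LB s m = Some b" unfolding LB_def using m b by auto
qed



lemma dotw_Nil[simp]: "dotw [] = 0" unfolding dotw_def by simp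

lemma dotw_Cons[simp]: "dotw (d # l) = real d + omega * dotw l"
  unfolding dotw_def by (simp add: sum.lessThan_Suc_shift sum_distrib_left algebra_simps del: sum.lessThan_Suc)

lemma dotw_append_zeros[simp]: "dotw (b @ replicate n 0) = dotw b"
proof (induction b)
  case Nil
  have "dotw (replicate n 0) = 0" by (induction n) auto
  thus ?case by simp
qed simp

lemma dotw_nonneg: "dotw l \<ge> 0"
  by (induction l) (auto intro!: add_nonneg_nonneg mult_nonneg_nonneg simp: less_imp_le[OF omega_pos])

lemma dotw_ge1: "l \<noteq> [] \<Longrightarrow> hd l = 1 \<Longrightarrow> dotw l \<ge> 1"
  by (cases l) (auto intro!: mult_nonneg_nonneg dotw_nonneg simp: less_imp_le[OF omega_pos])

lemma dotw_lt_phi: "vl l \<Longrightarrow> dotw l < phi \<and> (l \<noteq> [] \<longrightarrow> hd l = 0 \<longrightarrow> dotw l < 1)"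
proof (induction l rule: vl.induct)
  case 1 thus ?case using phi_pos by simp
next
  case (2 d) thus ?case using phi_gt1 by (cases d) auto
next
  case (3 d e l)
  hence IH: "dotw (e # l) < phi" "e = 0 \<longrightarrow> dotw (e # l) < 1" by auto
  have d: "d = 0 \<or> (d = 1 \<and> e = 0)" using 3 by auto
  thus ?case
  proof
    assume "d = 0"
    hence "dotw (d # e # l) = omega * dotw (e # l)" by simp
    also have "\<dots> < omega * phi" using IH omega_pos by simp
    finally show ?thesis using omega_phi phi_gt1 by simp
  next
    assume h: "d = 1 \<and> e = 0"
    hence "dotw (d # e # l) = 1 + omega * dotw (e # l)" by simp
    also have "\<dots> < 1 + omega" using IH h omega_pos by simp
    finally show ?thesis using one_plus_omega h by simp
  qed
qed

lemma zF_ne0[simp]: "zF n \<noteq> 0" using zF_Suc_pos[of n] by simp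

lemma fv_zero_dotw: "fv r = 0 \<Longrightarrow> dotw r = 0"
  by (induction r) auto

definition tau :: "nat list \<Rightarrow> real" where
  "tau b = (if last b = 0 then omega ^ (length b - 1) else omega ^ length b)"

lemma tau_Cons: "l \<noteq> [] \<Longrightarrow> tau (d # l) = omega * tau l"
  unfolding tau_def by (cases l) auto

lemma tau_pos: "tau b > 0" unfolding tau_def using omega_pos by auto

lemma succ:
  "vl b \<Longrightarrow> b \<noteq> [] \<Longrightarrow>
    (fv b + 1 = zF (Suc (length b)) \<and> dotw b + tau b = phi) \<or>
    (\<exists>c. vl c \<and> length c = length b \<and> fv c = fv b + 1 \<and> dotw c = dotw b + tau b \<and> (hd b = 1 \<longrightarrow> hd c = 1))"
proof (induction b)
  case Nil thus ?case by simp
next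
  case (Cons d l)
  have d01: "d = 0 \<or> d = 1" using Cons.prems by (auto simp: vl_Cons)
  show ?case
  proof (cases "l = []")
    case True
    from d01 show ?thesis
    proof
      assume "d = 0"
      thus ?thesis using True by (intro disjI2 exI[of _ "[1]"]) (auto simp: tau_def)
    next
      assume "d = 1"
      thus ?thesis using True one_plus_omega by (auto simp: tau_def)
    qed
  next
    case lne: False
    have vl: "vl l" and hdl: "d = 1 \<longrightarrow> hd l = 0" using Cons.prems lne by (auto simp: vl_Cons)
    have tc: "tau (d # l) = omega * tau l" using tau_Cons[OF lne] .
    obtain k where lk: "length l = Suc k" using lne by (cases l) auto
    from Cons.IH[OF vl lne] show ?thesis
    proof
      assume i: "fv l + 1 = zF (Suc (length l)) \<and> dotw l + tau l = phi"
      from d01 show ?thesis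
      proof
        assume d0: "d = 0"
        let ?c = "1 # replicate (length l) 0"
        have "vl ?c" using lk by (simp add: vl_Cons vl_replicate)
        moreover have "dotw ?c = dotw (d # l) + tau (d # l)"
        proof -
          have "dotw ?c = 1" using dotw_append_zeros[of "[]" "length l"] by simp
          moreover have "dotw (d # l) + tau (d # l) = omega * (dotw l + tau l)"
            using d0 tc by (simp add: algebra_simps)
          ultimately show ?thesis using i omega_phi by simp
        qed
        ultimately show ?thesis using i d0 by (intro disjI2 exI[of _ ?c]) auto
      next
        assume d1: "d = 1"
        then obtain l' where l': "l = 0 # l'" using hdl lne by (cases l) auto
        have "fv l < zF (length l)" using fv_upper[of l'] vl l' by (auto simp: vl_Cons)
        moreover have "zF (Suc (length l)) = zF (length l) + zF k" using lk by simp
        ultimately show ?thesis using i zF_Suc_pos[of k] by simp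
      qed
    next
      assume "\<exists>c. vl c \<and> length c = length l \<and> fv c = fv l + 1 \<and> dotw c = dotw l + tau l \<and> (hd l = 1 \<longrightarrow> hd c = 1)"
      then obtain c where c: "vl c" "length c = length l" "fv c = fv l + 1" "dotw c = dotw l + tau l" by blast
      have cne: "c \<noteq> []" using c lne by auto
      from d01 show ?thesis
      proof
        assume d0: "d = 0"
        show ?thesis using c d0 tc cne
          by (intro disjI2 exI[of _ "0 # c"]) (auto simp: vl_Cons algebra_simps)
      next
        assume d1: "d = 1"
        show ?thesis
        proof (cases "hd c = 0")
          case True
          show ?thesis using c d1 tc cne True
            by (intro disjI2 exI[of _ "1 # c"]) (auto simp: vl_Cons algebra_simps)
        next
          case False
          hence hc: "hd c = 1" using c cne vl_set[of c "hd c"] by auto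
          then obtain r where r: "c = 1 # r" using cne by (cases c) auto
          obtain l' where l': "l = 0 # l'" using hdl d1 lne by (cases l) auto
          have "fv l' < zF (length l)" using fv_upper[of l'] vl l' by (auto simp: vl_Cons)
          moreover have "fv c = zF (length l) + fv r" using r c(2) by simp
          ultimately have fr: "fv r = 0" and fl: "fv l' + 1 = zF (length l)" using c(3) l' by auto
          have "fv (d # l) + 1 = zF (Suc (Suc (length l)))" using d1 fl l' by simp
          moreover have "dotw (d # l) + tau (d # l) = phi"
          proof -
            have "dotw (d # l) + tau (d # l) = 1 + omega * dotw c" using d1 tc c(4) by (simp add: algebra_simps)
            also have "\<dots> = 1 + omega" using r fv_zero_dotw[OF fr] by simp
            finally show ?thesis using one_plus_omega by simp
          qed
          ultimately show ?thesis by simp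
        qed
      qed
    qed
  qed
qed

lemma even_sum_phi: "j \<ge> 1 \<Longrightarrow> (\<Sum>k<2*j. if even k then omega ^ k else 0) + omega ^ (2*j - 1) = phi"
proof (induction j rule: dec_induct)
  case base
  have "(\<Sum>k<2. if even k then omega ^ k else 0) = 1" by (simp add: numeral_2_eq_2)
  thus ?case using one_plus_omega by simp
next
  case (step j)
  have "(\<Sum>k<2*Suc j. if even k then omega ^ k else 0) = (\<Sum>k<2*j. if even k then omega ^ k else 0) + omega ^ (2*j)"
    by simp
  moreover have "omega ^ (2 * j) + omega ^ (2 * Suc j - 1) = omega ^ (2*j - 1)"
    using omega_pow_rec[of "2*j - 1"] step(1) by (simp add: Suc_diff_le)
  ultimately show ?case using step by simp
qed

lemma sum_drop_last:
  assumes "\<And>k. k < i \<Longrightarrow> f k = g k" "f i = c"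
  shows "(\<Sum>k<Suc i. f k) = (\<Sum>k<i. g k) + c"
  using assms by simp

lemma last_block_dotw: "s \<ge> 2 \<Longrightarrow> dotw (last_block s) = phi"
proof -
  assume s: "s \<ge> 2"
  define f where "f = (\<lambda>i. if even s then (if odd i \<or> i = s then 1 else 0)
                               else (if (odd i \<and> i \<noteq> s) \<or> i = s - 1 then 1 else (0::nat)))"
  have lb: "last_block s = map f [1..<s+1]" unfolding last_block_def f_def by simp
  have d: "dotw (last_block s) = (\<Sum>k<s. real (f (Suc k)) * omega ^ k)"
  proof -
    have len: "length (last_block s) = s" unfolding lb by simp
    have nth: "last_block s ! k = f (Suc k)" if "k < s" for k
      unfolding lb using that by (simp only: nth_map length_upt nth_upt) simp_all
    show ?thesis unfolding dotw_def len by (intro sum.cong refl) (simp add: nth)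
  qed
  define E where "E = (\<lambda>k. if even k then omega ^ k else (0::real))"
  define F where "F = (\<lambda>k. real (f (Suc k)) * omega ^ k)"
  define j where "j = s div 2"
  have j: "s = 2 * j \<or> s = Suc (2 * j)" unfolding j_def by presburger
  have j1: "j \<ge> 1" using s j by auto
  obtain i where i: "2 * j = Suc i" using j1 by (cases j) auto
  have oi: "odd i" using i by presburger
  have eq: "(\<Sum>k<2*j. E k) = (\<Sum>k<i. E k)"
    unfolding i using oi by (simp add: E_def)
  have "(\<Sum>k<s. F k) = (\<Sum>k<i. E k) + omega ^ i"
  proof (cases "even s")
    case True
    hence sj: "s = Suc i" using j i by presburger
    show ?thesis unfolding sj
    proof (rule sum_drop_last)
      fix k assume "k < i"
      thus "F k = E k" unfolding F_def f_def E_def using True sj by auto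
    next
      show "F i = omega ^ i" unfolding F_def f_def using True sj by auto
    qed
  next
    case False
    hence sj: "s = Suc (Suc i)" using j i by presburger
    have "(\<Sum>k<s. F k) = (\<Sum>k<Suc i. F k) + 0" unfolding sj
      by (rule sum_drop_last) (use False sj in \<open>auto simp: F_def f_def\<close>)
    also have "(\<Sum>k<Suc i. F k) = (\<Sum>k<i. E k) + omega ^ i"
    proof (rule sum_drop_last)
      fix k assume "k < i"
      thus "F k = E k" unfolding F_def f_def E_def using False sj by auto
    next
      show "F i = omega ^ i" unfolding F_def f_def using False sj by auto
    qed
    finally show ?thesis by simp
  qed
  thus ?thesis using d even_sum_phi[OF j1] eq i unfolding F_def E_def by simp
qed

lemma btilde_val:
  assumes b: "b \<in> FS s" and s: "2 \<le> s"
  shows "dotw (btilde s b) = dotw b + tau b \<and> dotw b + tau b \<le> phi"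
proof -
  have bp: "vl b" "b \<noteq> []" "hd b = 1" "length b = s" using FS_props[OF b] s by auto
  from succ[OF bp(1) bp(2)] show ?thesis
  proof
    assume i: "fv b + 1 = zF (Suc (length b)) \<and> dotw b + tau b = phi"
    have "\<not> (\<exists>c\<in>FS s. valF s c = valF s b + 1)"
    proof
      assume "\<exists>c\<in>FS s. valF s c = valF s b + 1"
      then obtain c where c: "c \<in> FS s" "valF s c = valF s b + 1" by auto
      have cp: "vl c" "length c = s" using FS_props[OF c(1)] s by auto
      have "fv c = fv b + 1" using c(2) valF_fv[OF cp(2)] valF_fv[OF bp(4)] by simp
      thus False using fv_upper[OF cp(1)] i cp bp by simp
    qed
    hence "btilde s b = last_block s" unfolding btilde_def by (simp only: if_False)
    thus ?thesis using last_block_dotw[OF s] i by simp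
  next
    assume "\<exists>c. vl c \<and> length c = length b \<and> fv c = fv b + 1 \<and> dotw c = dotw b + tau b \<and> (hd b = 1 \<longrightarrow> hd c = 1)"
    then obtain c where c0: "vl c" "length c = length b" "fv c = fv b + 1" "dotw c = dotw b + tau b" "hd b = 1 \<longrightarrow> hd c = 1"
      by blast
    have c: "vl c" "length c = s" "fv c = fv b + 1" "dotw c = dotw b + tau b" "hd c = 1"
      using c0 bp(3) bp(4) by simp_all
    have cne: "c \<noteq> []" using c(2) s by (cases c) simp_all
    have cF: "c \<in> FS s" using FS_intro[OF c(1) cne c(5) c(2)] by (rule conjunct1)
    have vc: "valF s c = valF s b + 1" using valF_fv[OF c(2)] valF_fv[OF bp(4)] c(3) by simp
    have uniq: "c2 = c" if "c2 \<in> FS s \<and> valF s c2 = valF s b + 1" for c2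
    proof -
      have "vl c2 \<and> c2 \<noteq> [] \<and> hd c2 = 1 \<and> length c2 = s" using FS_props[of c2 s] that s by simp
      hence cp: "vl c2" "length c2 = s" by simp_all
      have "fv c2 = fv c" using that valF_fv[OF cp(2)] valF_fv[OF c(2)] vc by simp
      thus ?thesis using fv_unique[OF cp(1) c(1)] cp(2) c(2) by simp
    qed
    have "(THE c2. c2 \<in> FS s \<and> valF s c2 = valF s b + 1) = c"
      by (rule the_equality) (use cF vc uniq in blast)+
    moreover have "\<exists>c\<in>FS s. valF s c = valF s b + 1" using cF vc by blast
    ultimately have "btilde s b = c" unfolding btilde_def by (simp only: if_True)
    thus ?thesis using c(4) dotw_lt_phi[OF c(1)] by simp
  qed
qed



definition psi :: real where "psi = 1 - phi"

lemma psi_eq: "psi = - omega" unfolding psi_def omega_eq by simp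
lemma psi_sq: "psi * psi = psi + 1" unfolding psi_def using phi_sq by (simp add: algebra_simps)

lemma binet: "sqrt 5 * real (zF n) = phi ^ Suc n - psi ^ Suc n"
proof (induction n rule: zF.induct)
  case 1 thus ?case unfolding psi_def phi_def by simp
next
  case 2
  have "phi ^ 2 - psi ^ 2 = (phi - psi) * (phi + psi)" by (simp add: algebra_simps power2_eq_square)
  thus ?case unfolding psi_def phi_def by (simp add: numeral_2_eq_2)
next
  case (3 n)
  have "phi ^ Suc (Suc (Suc n)) = phi ^ Suc n * (phi * phi)" by (simp add: algebra_simps)
  also have "\<dots> = phi ^ Suc (Suc n) + phi ^ Suc n" unfolding phi_sq by (simp add: algebra_simps)
  finally have a: "phi ^ Suc (Suc (Suc n)) = phi ^ Suc (Suc n) + phi ^ Suc n" .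
  have "psi ^ Suc (Suc (Suc n)) = psi ^ Suc n * (psi * psi)" by (simp add: algebra_simps)
  also have "\<dots> = psi ^ Suc (Suc n) + psi ^ Suc n" unfolding psi_sq by (simp add: algebra_simps)
  finally have b: "psi ^ Suc (Suc (Suc n)) = psi ^ Suc (Suc n) + psi ^ Suc n" .
  show ?case using 3 a b by (simp add: algebra_simps)
qed

lemma abs_psi_pow: "\<bar>psi ^ n\<bar> = omega ^ n"
  unfolding psi_eq using omega_pos by (simp add: power_abs)

lemma omega_pow_le1: "omega ^ n \<le> 1"
  using omega_pos omega_lt1 by (simp add: power_le_one)

lemma phi_omega_pow: "phi ^ n * omega ^ n = 1"
  using omega_phi by (metis power_mult_distrib power_one mult.commute)

lemma fv_err: "vl l \<Longrightarrow> \<bar>sqrt 5 * real (fv l) - phi ^ Suc (length l) * dotw l\<bar> \<le> 1 - omega ^ length l"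
proof (induction l)
  case (Cons d l)
  have d: "d \<le> 1" and vl: "vl l" using Cons.prems by (auto simp: vl_Cons)
  have e: "sqrt 5 * real (fv (d # l)) - phi ^ Suc (length (d # l)) * dotw (d # l)
     = - real d * psi ^ Suc (Suc (length l)) + (sqrt 5 * real (fv l) - phi ^ Suc (length l) * dotw l)"
  proof -
    define X where "X = real (zF (Suc (length l)))"
    define P where "P = phi ^ Suc (Suc (length l))"
    define Q where "Q = psi ^ Suc (Suc (length l))"
    have po: "P * omega = phi ^ Suc (length l)"
      unfolding P_def using omega_phi by (simp add: algebra_simps)
    have bx: "sqrt 5 * X = P - Q" unfolding X_def P_def Q_def using binet[of "Suc (length l)"] by simp
    have "sqrt 5 * real (fv (d # l)) - phi ^ Suc (length (d # l)) * dotw (d # l)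
       = real d * (sqrt 5 * X) + sqrt 5 * real (fv l) - P * (real d + omega * dotw l)"
      unfolding X_def P_def by (simp add: algebra_simps)
    also have "\<dots> = - real d * Q + (sqrt 5 * real (fv l) - (P * omega) * dotw l)"
      unfolding bx by (simp add: algebra_simps)
    finally show ?thesis unfolding po Q_def .
  qed
  have "\<bar>- real d * psi ^ Suc (Suc (length l))\<bar> \<le> omega ^ Suc (Suc (length l))"
    using d abs_psi_pow[of "Suc (Suc (length l))"] omega_pos
    by (cases d) (auto simp: abs_mult)
  hence "\<bar>sqrt 5 * real (fv (d # l)) - phi ^ Suc (length (d # l)) * dotw (d # l)\<bar>
      \<le> omega ^ Suc (Suc (length l)) + (1 - omega ^ length l)"
    using Cons.IH[OF vl] unfolding e by linarith
  also have "\<dots> = 1 - omega ^ length (d # l)"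
    using omega_pow_rec[of "length l"] by simp
  finally show ?case .
qed simp

lemma fv_err1: "vl l \<Longrightarrow> \<bar>sqrt 5 * real (fv l) - phi ^ Suc (length l) * dotw l\<bar> \<le> 1"
  using fv_err[of l] omega_pos[THEN less_imp_le, THEN zero_le_power, of "length l"] by linarith



lemma ln_lower: "1 \<le> (x::real) \<Longrightarrow> 2 * (x - 1) / (x + 1) \<le> ln x"
proof -
  assume x: "1 \<le> x"
  let ?f = "\<lambda>t::real. ln t - 2 * (t - 1) / (t + 1)"
  have "?f 1 \<le> ?f x"
  proof (rule DERIV_nonneg_imp_nondecreasing[OF x])
    fix t :: real assume t: "1 \<le> t" "t \<le> x"
    have "DERIV ?f t :> (1 / t - 4 / (t + 1)^2)"
      using t by (auto intro!: derivative_eq_intros simp: field_simps power2_eq_square)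
    moreover have "1 / t - 4 / (t + 1)^2 \<ge> 0"
    proof -
      have "(t + 1)^2 - 4 * t = (t - 1)^2" by (simp add: power2_eq_square algebra_simps)
      hence "4 * t \<le> (t + 1)^2" using zero_le_power2[of "t - 1"] by linarith
      thus ?thesis using t by (simp add: field_simps)
    qed
    ultimately show "\<exists>y. DERIV ?f t :> y \<and> 0 \<le> y" by blast
  qed
  thus ?thesis by simp
qed


lemma phi_sq_c: "phi * (phi * c) = (phi + 1) * c"
  using phi_sq by (metis mult.assoc)

lemma phi_pow4: "phi ^ 4 = 3 * phi + 2"
proof -
  have "phi ^ 4 = (phi * phi) * (phi * phi)" by (simp add: power4_eq_xxxx)
  thus ?thesis unfolding phi_sq by (simp add: algebra_simps phi_sq phi_sq_c)
qed

lemma phi_pow8: "phi ^ 8 = 21 * phi + 13"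
proof -
  have "phi ^ 8 = phi ^ 4 * phi ^ 4" by (simp flip: power_add)
  thus ?thesis unfolding phi_pow4 by (simp add: algebra_simps phi_sq phi_sq_c)
qed

lemma omega_pow3: "omega ^ 3 = 2 * phi - 3"
proof -
  have "omega ^ 3 = (phi - 1) * ((phi - 1) * (phi - 1))" unfolding omega_eq by (simp add: power3_eq_cube)
  thus ?thesis by (simp add: algebra_simps phi_sq phi_sq_c)
qed

lemma phi_gt: "phi > 1.615"
proof -
  have "(2.23::real) < sqrt 5" by (rule real_less_rsqrt) (simp add: power2_eq_square)
  thus ?thesis unfolding phi_def by simp
qed

lemma lnphi_ge: "ln phi \<ge> 2 * (2 * phi - 3)"
proof -
  have "2 * (phi - 1) / (phi + 1) \<le> ln phi" using ln_lower phi_gt1 by simp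
  moreover have "2 * (phi - 1) / (phi + 1) = 2 * (2 * phi - 3)"
  proof -
    have "phi + 1 > 0" using phi_pos by simp
    moreover have "2 * (2 * phi - 3) * (phi + 1) = 2 * (phi - 1)"
      using phi_sq by (simp add: algebra_simps)
    ultimately show ?thesis by (simp add: field_simps)
  qed
  ultimately show ?thesis by simp
qed

lemma key_numeric: "pi ^ 2 + (ln phi) ^ 2 < (ln phi * phi ^ 4) ^ 2"
proof -
  define L where "L = ln phi"
  have a: "L \<ge> 2 * (2 * phi - 3)" unfolding L_def by (rule lnphi_ge)
  have p: "2 * phi - 3 > 0" using phi_gt by simp
  have "L ^ 2 \<ge> (2 * (2 * phi - 3)) ^ 2" using a p by (intro power_mono) auto
  moreover have "(2 * (2 * phi - 3)) ^ 2 = 4 * (13 - 8 * phi)"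
    by (simp add: power2_eq_square algebra_simps phi_sq phi_sq_c)
  ultimately have L2: "L ^ 2 \<ge> 4 * (13 - 8 * phi)" by simp
  have "phi ^ 8 - 1 > 0" unfolding phi_pow8 using phi_pos by simp
  hence "L ^ 2 * (phi ^ 8 - 1) \<ge> 4 * (13 - 8 * phi) * (phi ^ 8 - 1)"
    using L2 by (intro mult_right_mono) auto
  also have "4 * (13 - 8 * phi) * (phi ^ 8 - 1) = 36 * phi - 48"
    unfolding phi_pow8 by (simp add: algebra_simps phi_sq phi_sq_c)
  finally have "L ^ 2 * (phi ^ 8 - 1) \<ge> 36 * phi - 48" .
  moreover have "pi ^ 2 < 36 * phi - 48"
  proof -
    have "pi \<le> 3.1416" using pi_approx(2) by simp
    hence h: "pi ^ 2 \<le> 3.1416 ^ 2" using pi_gt3 by (intro power_mono) auto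
    have "(3.1416::real) ^ 2 < 36 * phi - 48" using phi_gt by (simp add: power2_eq_square)
    thus ?thesis using h by linarith
  qed
  ultimately have "pi ^ 2 + L ^ 2 < L ^ 2 * phi ^ 8" by (simp add: algebra_simps)
  also have "L ^ 2 * phi ^ 8 = (L * phi ^ 4) ^ 2" by (simp add: power_mult_distrib flip: power_mult)
  finally show ?thesis unfolding L_def .
qed



definition LL :: real where "LL = ln phi"
definition gg :: "real \<Rightarrow> real" where
  "gg x = exp ((x + 1) * LL) + exp (- (x + 1) * LL) * cos (pi * x)"

lemma LL_pos: "LL > 0" unfolding LL_def using phi_gt1 by simp
lemma exp_LL: "exp LL = phi" unfolding LL_def using phi_pos by simp

lemma frakF_gg: "frakF x = gg x / sqrt 5"
proof -
  have p: "phi powr y = exp (y * LL)" for y unfolding powr_def LL_def using phi_pos by simp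
  have "frakF x = (exp LL * exp (x * LL) + exp LL * exp (- x * LL) * exp (-2 * LL) * cos (pi * x)) / sqrt 5"
    unfolding frakF_def p exp_LL by (simp add: algebra_simps add_divide_distrib)
  also have "exp LL * exp (x * LL) = exp ((x + 1) * LL)" by (simp add: algebra_simps flip: exp_add)
  also have "exp LL * exp (- x * LL) * exp (-2 * LL) = exp (- (x + 1) * LL)" by (simp add: algebra_simps flip: exp_add)
  finally show ?thesis unfolding gg_def .
qed

lemma gg_deriv: "DERIV gg x :> (LL * exp ((x + 1) * LL) - LL * exp (- (x + 1) * LL) * cos (pi * x)
   - pi * exp (- (x + 1) * LL) * sin (pi * x))"
proof -
  have d1: "DERIV (\<lambda>x. exp ((x + 1) * LL)) x :> LL * exp ((x + 1) * LL)"
    by (auto intro!: derivative_eq_intros)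
  have d2: "DERIV (\<lambda>x. exp (- (x + 1) * LL)) x :> - LL * exp (- (x + 1) * LL)"
    by (auto intro!: derivative_eq_intros)
  have d3: "DERIV (\<lambda>x. cos (pi * x)) x :> - pi * sin (pi * x)"
    by (auto intro!: derivative_eq_intros)
  have "DERIV gg x :> (LL * exp ((x + 1) * LL) + (- LL * exp (- (x + 1) * LL) * cos (pi * x)
      + (- pi * sin (pi * x)) * exp (- (x + 1) * LL)))"
    unfolding gg_def by (intro DERIV_add DERIV_mult d1 d2 d3)
  thus ?thesis by (rule DERIV_cong) (simp add: algebra_simps)
qed

lemma gg_deriv_pos:
  assumes x: "1 \<le> x"
  shows "LL * exp ((x + 1) * LL) - LL * exp (- (x + 1) * LL) * cos (pi * x) - pi * exp (- (x + 1) * LL) * sin (pi * x) > 0"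
proof -
  define P where "P = exp ((x + 1) * LL)"
  define c where "c = cos (pi * x)"
  define s where "s = sin (pi * x)"
  have Pp: "P > 0" unfolding P_def by simp
  have Q: "exp (- (x + 1) * LL) = 1 / P" unfolding P_def by (simp only: mult_minus_left exp_minus')
  have "exp (2 * LL) \<le> P" unfolding P_def using x LL_pos by simp
  moreover have "exp (2 * LL) = phi ^ 2" using exp_LL exp_of_nat_mult[of 2 LL] by simp
  ultimately have P2: "phi ^ 2 \<le> P" by simp
  hence "(phi ^ 2) ^ 2 \<le> P ^ 2" using phi_pos by (intro power_mono) auto
  hence P4: "phi ^ 4 \<le> P ^ 2" by (simp flip: power_mult)
  have cs: "c ^ 2 + s ^ 2 = 1" unfolding c_def s_def by (simp add: add.commute)
  have "(LL * c + pi * s) ^ 2 + (LL * s - pi * c) ^ 2 = (LL ^ 2 + pi ^ 2) * (c ^ 2 + s ^ 2)"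
    by (simp add: power2_eq_square algebra_simps)
  hence "(LL * c + pi * s) ^ 2 + (LL * s - pi * c) ^ 2 = LL ^ 2 + pi ^ 2" using cs by simp
  hence "(LL * c + pi * s) ^ 2 \<le> LL ^ 2 + pi ^ 2" using zero_le_power2[of "LL * s - pi * c"] by linarith
  also have "\<dots> < (LL * phi ^ 4) ^ 2" using key_numeric unfolding LL_def by simp
  finally have sq: "(LL * c + pi * s) ^ 2 < (LL * phi ^ 4) ^ 2" .
  have lt: "LL * c + pi * s < LL * phi ^ 4"
  proof (cases "LL * c + pi * s \<le> 0")
    case True thus ?thesis using LL_pos phi_pos by (smt (verit) zero_less_mult_iff zero_less_power)
  next
    case False
    thus ?thesis using sq power_less_imp_less_base[of "LL * c + pi * s" 2 "LL * phi ^ 4"] LL_pos phi_pos by simp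
  qed
  have "LL * phi ^ 4 \<le> LL * P ^ 2" using P4 LL_pos by simp
  hence "0 < LL * P ^ 2 - LL * c - pi * s" using lt by simp
  hence "0 < (LL * P ^ 2 - LL * c - pi * s) / P" using Pp by simp
  also have "(LL * P ^ 2 - LL * c - pi * s) / P = LL * P - LL * (1 / P) * c - pi * (1 / P) * s"
    using Pp by (simp add: field_simps power2_eq_square)
  finally have "0 < LL * P - LL * (1 / P) * c - pi * (1 / P) * s" .
  thus ?thesis unfolding Q P_def c_def s_def .
qed

lemma gg_strict: "1 \<le> x \<Longrightarrow> x < y \<Longrightarrow> gg x < gg y"
proof -
  assume xy: "1 \<le> x" "x < y"
  show ?thesis
  proof (rule DERIV_pos_imp_increasing[of x y gg])
    fix t assume "x \<le> t" "t \<le> y"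
    hence "1 \<le> t" using xy by simp
    thus "\<exists>d. DERIV gg t :> d \<and> d > 0" using gg_deriv[of t] gg_deriv_pos[of t] by blast
  qed (use xy in simp)
qed

lemma frakF_strict: "1 \<le> x \<Longrightarrow> x < y \<Longrightarrow> frakF x < frakF y"
  unfolding frakF_gg using gg_strict by (simp add: divide_strict_right_mono)

lemma frakF_le_iff: "1 \<le> x \<Longrightarrow> 1 \<le> y \<Longrightarrow> frakF x \<le> frakF y \<longleftrightarrow> x \<le> y"
proof
  assume "1 \<le> x" "1 \<le> y" "frakF x \<le> frakF y"
  thus "x \<le> y" using frakF_strict[of y x] by (cases "y < x") auto
next
  assume "1 \<le> x" "1 \<le> y" "x \<le> y"
  thus "frakF x \<le> frakF y" using frakF_strict[of x y] by (cases "x = y") auto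
qed

lemma frakF_less_iff: "1 \<le> x \<Longrightarrow> 1 \<le> y \<Longrightarrow> frakF x < frakF y \<longleftrightarrow> x < y"
  using frakF_le_iff by (meson linorder_not_le)

lemma frakF_cont: "isCont frakF x"
proof -
  have "isCont gg x" unfolding gg_def by (intro continuous_intros)
  thus ?thesis unfolding frakF_gg[abs_def] by (intro continuous_intros) auto
qed

lemma frakF_nat: "frakF (real n) = real (zF n)"
proof -
  have a: "exp ((real n + 1) * LL) = phi ^ Suc n"
    using exp_of_nat_mult[of "Suc n" LL] exp_LL by (simp add: algebra_simps)
  have "exp (- (real n + 1) * LL) = 1 / phi ^ Suc n"
    by (simp only: mult_minus_left exp_minus' a)
  hence b: "exp (- (real n + 1) * LL) = omega ^ Suc n"
    unfolding omega_def by (simp add: power_one_over)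
  have "gg (real n) = phi ^ Suc n + omega ^ Suc n * (-1) ^ n"
    unfolding gg_def a b by (simp add: mult.commute)
  also have "\<dots> = phi ^ Suc n - psi ^ Suc n" unfolding psi_eq by (simp add: power_minus')
  also have "\<dots> = sqrt 5 * real (zF n)" using binet by simp
  finally show ?thesis unfolding frakF_gg by simp
qed

lemma frakF_ge: "1 \<le> x \<Longrightarrow> 1 \<le> frakF x"
  using frakF_le_iff[of 1 x] frakF_nat[of 1] by simp

lemma frakF_inv:
  assumes m: "1 \<le> m"
  shows "1 \<le> frakF_inv (real m) \<and> frakF (frakF_inv (real m)) = real m"
proof -
  have "frakF 1 \<le> real m" using frakF_nat[of 1] m by simp
  moreover have "real m \<le> frakF (real m)" using frakF_nat[of m] zF_ge[of m] by simp
  ultimately obtain x where x: "1 \<le> x" "x \<le> real m" "frakF x = real m"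
    using IVT[of frakF 1 "real m" "real m"] m frakF_cont by auto
  have "(THE x. 1 \<le> x \<and> frakF x = real m) = x"
  proof (rule the_equality)
    show "1 \<le> x \<and> frakF x = real m" using x by simp
    fix y assume "1 \<le> y \<and> frakF y = real m"
    thus "y = x" using x frakF_strict by (metis linorder_neq_iff order_less_irrefl)
  qed
  thus ?thesis unfolding frakF_inv_def using x by simp
qed

lemma frakF_inv_floor:
  assumes m: "0 < m"
  shows "floor (frakF_inv (real m)) = int (length (zeck m))"
proof -
  define x where "x = frakF_inv (real m)"
  define L where "L = length (zeck m)"
  have x: "1 \<le> x" "frakF x = real m" using frakF_inv[of m] m unfolding x_def by auto
  have z: "zF L \<le> m" "m < zF (Suc L)" "1 \<le> L" using is_zeck_len[OF zeck[OF m]] unfolding L_def by auto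
  have "frakF (real L) \<le> frakF x" using z x frakF_nat[of L] by simp
  hence "real L \<le> x" using frakF_le_iff[of "real L" x] z x by simp
  moreover have "frakF x < frakF (real (Suc L))" using z x frakF_nat[of "Suc L"] by simp
  hence "x < real L + 1" using frakF_less_iff[of x "real (Suc L)"] z x by simp
  ultimately show ?thesis unfolding x_def[symmetric] L_def[symmetric] by linarith
qed



definition clamp :: "real \<Rightarrow> real" where "clamp b = max 0 (min 1 b)"

definition NN :: "(nat \<Rightarrow> real) \<Rightarrow> real \<Rightarrow> nat \<Rightarrow> nat" where
  "NN x b n = card {k\<in>{1..n}. frac (x k) \<le> b}"

lemma NN_lim:
  assumes equi: "equidistributed_frac x"
  shows "(\<lambda>n. real (NN x b n) / real n) \<longlonglongrightarrow> clamp b"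
proof (cases "b < 0")
  case True
  have "NN x b n = 0" for n
  proof -
    have "{k\<in>{1..n}. frac (x k) \<le> b} = {}" using True frac_ge_0 by (auto simp: not_le intro: less_le_trans)
    thus ?thesis unfolding NN_def by simp
  qed
  thus ?thesis using True unfolding clamp_def by simp
next
  case False
  show ?thesis
  proof (cases "b > 1")
    case True
    have "NN x b n = n" for n
    proof -
      have "{k\<in>{1..n}. frac (x k) \<le> b} = {1..n}" using True frac_lt_1 by (auto intro: less_imp_le less_trans)
      thus ?thesis unfolding NN_def by simp
    qed
    hence "eventually (\<lambda>n. 1 = real (NN x b n) / real n) sequentially"
      using eventually_ge_at_top[of 1] by (auto elim!: eventually_mono)
    moreover have "clamp b = 1" using True unfolding clamp_def by simp
    ultimately show ?thesis using Lim_transform_eventually[OF tendsto_const] by metis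
  next
    case False2: False
    hence "b \<in> {0..1}" "clamp b = b" using False unfolding clamp_def by auto
    thus ?thesis using equi unfolding equidistributed_frac_def NN_def by auto
  qed
qed

lemma clamp_le: "0 \<le> b \<Longrightarrow> clamp b \<le> b" unfolding clamp_def by auto
lemma clamp_ge: "b \<le> 1 \<Longrightarrow> b \<le> clamp b" unfolding clamp_def by auto

lemma NN_mono: "a \<le> b \<Longrightarrow> {k\<in>{1..n}. frac (x k) \<le> a} \<subseteq> {k\<in>{1..n}. frac (x k) \<le> b}"
  by auto

lemma count_lemma:
  fixes x :: "nat \<Rightarrow> real" and P :: "nat \<Rightarrow> bool"
  assumes equi: "equidistributed_frac x"
    and ag: "0 \<le> \<alpha>" "\<alpha> \<le> \<gamma>" "\<gamma> \<le> 1"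
    and H: "\<And>\<epsilon>. \<epsilon> > 0 \<Longrightarrow> \<exists>k0. \<forall>k\<ge>k0. (P k \<longrightarrow> \<alpha> - \<epsilon> \<le> frac (x k) \<and> frac (x k) \<le> \<gamma> + \<epsilon>)
        \<and> (\<alpha> + \<epsilon> \<le> frac (x k) \<and> frac (x k) \<le> \<gamma> - \<epsilon> \<longrightarrow> P k)"
  shows "(\<lambda>n. real (card {k\<in>{1..n}. P k}) / real n) \<longlonglongrightarrow> \<gamma> - \<alpha>"
proof (rule order_tendstoI)
  fix a assume a: "\<gamma> - \<alpha> < a"
  define \<epsilon> where "\<epsilon> = (a - (\<gamma> - \<alpha>)) / 4"
  have e: "\<epsilon> > 0" unfolding \<epsilon>_def using a by simp
  obtain k0 where k0: "\<forall>k\<ge>k0. (P k \<longrightarrow> \<alpha> - \<epsilon> \<le> frac (x k) \<and> frac (x k) \<le> \<gamma> + \<epsilon>)" using H[OF e] by blast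
  define U where "U = (\<lambda>n. real k0 / real n + (real (NN x (\<gamma> + \<epsilon>) n) / real n - real (NN x (\<alpha> - 2 * \<epsilon>) n) / real n))"
  have "U \<longlonglongrightarrow> 0 + (clamp (\<gamma> + \<epsilon>) - clamp (\<alpha> - 2 * \<epsilon>))"
    unfolding U_def by (intro tendsto_intros NN_lim equi tendsto_divide_0[OF tendsto_const] filterlim_real_sequentially)
  moreover have "clamp (\<gamma> + \<epsilon>) - clamp (\<alpha> - 2 * \<epsilon>) < a"
  proof -
    have c1: "clamp (\<gamma> + \<epsilon>) \<le> \<gamma> + \<epsilon>" using ag e by (intro clamp_le) simp
    have c2: "\<alpha> - 2 * \<epsilon> \<le> clamp (\<alpha> - 2 * \<epsilon>)" using ag e by (intro clamp_ge) simp
    have "\<gamma> - \<alpha> + 4 * \<epsilon> = a" unfolding \<epsilon>_def by (simp add: field_simps)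
    thus ?thesis using c1 c2 e by linarith
  qed
  ultimately have evU: "eventually (\<lambda>n. U n < a) sequentially" by (simp add: order_tendstoD)
  have "eventually (\<lambda>n. real (card {k\<in>{1..n}. P k}) / real n \<le> U n) sequentially"
    using eventually_ge_at_top[of 1]
  proof (rule eventually_mono)
    fix n :: nat assume n: "1 \<le> n"
    define B where "B = {k\<in>{1..n}. frac (x k) \<le> \<gamma> + \<epsilon>}"
    define C where "C = {k\<in>{1..n}. frac (x k) \<le> \<alpha> - 2 * \<epsilon>}"
    have CB: "C \<subseteq> B" unfolding B_def C_def using e ag by auto
    have "{k\<in>{1..n}. P k} \<subseteq> {..<k0} \<union> (B - C)"
    proof
      fix k assume k: "k \<in> {k\<in>{1..n}. P k}"
      show "k \<in> {..<k0} \<union> (B - C)"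
      proof (cases "k < k0")
        case False
        hence "\<alpha> - \<epsilon> \<le> frac (x k) \<and> frac (x k) \<le> \<gamma> + \<epsilon>" using k0 k by auto
        thus ?thesis using k e unfolding B_def C_def by auto
      qed simp
    qed
    hence "card {k\<in>{1..n}. P k} \<le> card ({..<k0} \<union> (B - C))" by (intro card_mono) (auto simp: B_def)
    also have "\<dots> \<le> k0 + card (B - C)" using card_Un_le[of "{..<k0}" "B - C"] by simp
    also have "card (B - C) = card B - card C" using CB by (intro card_Diff_subset) (auto simp: C_def)
    finally have "real (card {k\<in>{1..n}. P k}) \<le> real k0 + (real (card B) - real (card C))"
      using card_mono[OF _ CB] by (simp add: B_def of_nat_diff)
    hence "real (card {k\<in>{1..n}. P k}) / real n \<le> (real k0 + (real (card B) - real (card C))) / real n"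
      using n by (intro divide_right_mono) auto
    thus "real (card {k\<in>{1..n}. P k}) / real n \<le> U n"
      unfolding U_def NN_def B_def[symmetric] C_def[symmetric] by (simp add: add_divide_distrib diff_divide_distrib)
  qed
  thus "eventually (\<lambda>n. real (card {k\<in>{1..n}. P k}) / real n < a) sequentially"
    using evU by eventually_elim auto
next
  fix a assume a: "a < \<gamma> - \<alpha>"
  define \<epsilon> where "\<epsilon> = ((\<gamma> - \<alpha>) - a) / 4"
  have e: "\<epsilon> > 0" unfolding \<epsilon>_def using a by simp
  obtain k0 where k0: "\<forall>k\<ge>k0. (\<alpha> + \<epsilon>/2 \<le> frac (x k) \<and> frac (x k) \<le> \<gamma> - \<epsilon>/2 \<longrightarrow> P k)"
    using H[of "\<epsilon>/2"] e by auto
  define U where "U = (\<lambda>n. (real (NN x (\<gamma> - \<epsilon>) n) / real n - real (NN x (\<alpha> + \<epsilon>) n) / real n) - real k0 / real n)"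
  have "U \<longlonglongrightarrow> (clamp (\<gamma> - \<epsilon>) - clamp (\<alpha> + \<epsilon>)) - 0"
    unfolding U_def by (intro tendsto_intros NN_lim equi tendsto_divide_0[OF tendsto_const] filterlim_real_sequentially)
  moreover have "a < clamp (\<gamma> - \<epsilon>) - clamp (\<alpha> + \<epsilon>)"
  proof -
    have c1: "\<gamma> - \<epsilon> \<le> clamp (\<gamma> - \<epsilon>)" using ag e by (intro clamp_ge) simp
    have c2: "clamp (\<alpha> + \<epsilon>) \<le> \<alpha> + \<epsilon>" using ag e by (intro clamp_le) simp
    have "\<gamma> - \<alpha> - 4 * \<epsilon> = a" unfolding \<epsilon>_def by (simp add: field_simps)
    thus ?thesis using c1 c2 e by linarith
  qed
  ultimately have evU: "eventually (\<lambda>n. a < U n) sequentially" by (simp add: order_tendstoD)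
  have "eventually (\<lambda>n. U n \<le> real (card {k\<in>{1..n}. P k}) / real n) sequentially"
    using eventually_ge_at_top[of 1]
  proof (rule eventually_mono)
    fix n :: nat assume n: "1 \<le> n"
    define B where "B = {k\<in>{1..n}. frac (x k) \<le> \<gamma> - \<epsilon>}"
    define C where "C = {k\<in>{1..n}. frac (x k) \<le> \<alpha> + \<epsilon>}"
    have "(B - C) - {..<k0} \<subseteq> {k\<in>{1..n}. P k}"
    proof
      fix k assume k: "k \<in> (B - C) - {..<k0}"
      hence "\<alpha> + \<epsilon>/2 \<le> frac (x k) \<and> frac (x k) \<le> \<gamma> - \<epsilon>/2" "k \<ge> k0"
        unfolding B_def C_def using e by auto
      thus "k \<in> {k\<in>{1..n}. P k}" using k0 k unfolding B_def by auto
    qed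
    hence "card ((B - C) - {..<k0}) \<le> card {k\<in>{1..n}. P k}" by (intro card_mono) auto
    moreover have "card (B - C) - card {..<k0} \<le> card ((B - C) - {..<k0})"
      by (rule diff_card_le_card_Diff) simp
    moreover have "card B - card C \<le> card (B - C)"
      by (rule diff_card_le_card_Diff) (simp add: C_def)
    moreover have "card {..<k0} = k0" by simp
    ultimately have "card B \<le> card {k\<in>{1..n}. P k} + card C + k0"
      by arith
    hence "real (card B) \<le> real (card {k\<in>{1..n}. P k}) + real (card C) + real k0"
      by (metis of_nat_add of_nat_le_iff)
    hence "real (card B) - real (card C) - real k0 \<le> real (card {k\<in>{1..n}. P k})"
      by linarith
    hence "(real (card B) - real (card C) - real k0) / real n \<le> real (card {k\<in>{1..n}. P k}) / real n"
      using n by (intro divide_right_mono) auto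
    thus "U n \<le> real (card {k\<in>{1..n}. P k}) / real n"
      unfolding U_def NN_def B_def[symmetric] C_def[symmetric] by (simp add: diff_divide_distrib)
  qed
  thus "eventually (\<lambda>n. a < real (card {k\<in>{1..n}. P k}) / real n) sequentially"
    using evU by eventually_elim auto
qed



lemma phi_omega_shift: "k \<le> N \<Longrightarrow> phi ^ N * omega ^ k = phi ^ (N - k)"
proof -
  assume "k \<le> N"
  hence "phi ^ N = phi ^ (N - k) * phi ^ k" by (simp flip: power_add)
  thus ?thesis using phi_omega_pow[of k] by (simp add: mult.assoc)
qed

lemma TT_err:
  assumes b: "b \<noteq> []" "length b = s" and L: "s \<le> L"
  shows "\<bar>sqrt 5 * real (TT b L) - phi ^ Suc L * tau b\<bar> \<le> 1"
proof -
  obtain n where n: "TT b L = zF n" "phi ^ Suc L * tau b = phi ^ Suc n"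
  proof (cases "last b = 0")
    case True
    have "tau b = omega ^ (s - 1)" using True b unfolding tau_def by simp
    hence "phi ^ Suc L * tau b = phi ^ Suc L * omega ^ (s - 1)" by simp
    also have "\<dots> = phi ^ (Suc L - (s - 1))" by (rule phi_omega_shift) (use L in simp)
    also have "Suc L - (s - 1) = Suc (L - s + 1)" using L b by (cases s) auto
    finally have "phi ^ Suc L * tau b = phi ^ Suc (L - s + 1)" .
    moreover have "TT b L = zF (L - s + 1)" using True b unfolding TT_def by simp
    ultimately show ?thesis using that by blast
  next
    case False
    have "phi ^ Suc L * omega ^ s = phi ^ (Suc L - s)" by (rule phi_omega_shift) (use L in simp)
    moreover have "Suc L - s = Suc (L - s)" using L by simp
    moreover have "tau b = omega ^ s" using False b unfolding tau_def by simp
    ultimately have "phi ^ Suc L * tau b = phi ^ Suc (L - s)" by simp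
    moreover have "TT b L = zF (L - s)" using False b unfolding TT_def by simp
    ultimately show ?thesis using that by blast
  qed
  have "sqrt 5 * real (TT b L) - phi ^ Suc L * tau b = - (psi ^ Suc n)" unfolding n(1) n(2) using binet[of n] by simp
  thus ?thesis using abs_psi_pow[of "Suc n"] omega_pow_le1[of "Suc n"] by simp
qed

lemma gg_split:
  assumes x: "1 \<le> x"
  shows "\<bar>gg x - phi ^ Suc (nat (floor x)) * phi powr (frac x)\<bar> \<le> 1"
proof -
  define N where "N = nat (floor x)"
  have xN: "x = real N + frac x" unfolding N_def frac_def using x by simp
  have "exp ((x + 1) * LL) = phi powr (x + 1)" unfolding powr_def LL_def using phi_pos by simp
  also have "\<dots> = phi powr (real (Suc N)) * phi powr (frac x)"
    by (subst xN) (simp add: powr_add[symmetric] algebra_simps)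
  also have "phi powr (real (Suc N)) = phi ^ Suc N" using phi_pos by (rule powr_realpow)
  finally have e1: "exp ((x + 1) * LL) = phi ^ Suc N * phi powr (frac x)" .
  have "- (x + 1) * LL \<le> 0" using x LL_pos by (intro mult_nonpos_nonneg) auto
  hence e0: "exp (- (x + 1) * LL) \<le> 1" by simp
  have "\<bar>exp (- (x + 1) * LL) * cos (pi * x)\<bar> = exp (- (x + 1) * LL) * \<bar>cos (pi * x)\<bar>"
    by (simp add: abs_mult)
  also have "\<dots> \<le> 1" by (rule mult_le_one[OF e0 abs_ge_zero abs_cos_le_one])
  finally have "\<bar>exp (- (x + 1) * LL) * cos (pi * x)\<bar> \<le> 1" .
  thus ?thesis unfolding gg_def e1 N_def[symmetric] by simp
qed

lemma window:
  assumes b: "vl b" "b \<noteq> []" "hd b = 1" "length b = s" and e: "\<epsilon> > 0"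
  shows "\<exists>M0. \<forall>m>0. M0 \<le> length (zeck m) \<longrightarrow>
    (LB s m = Some b \<longrightarrow> log phi (dotw b) - \<epsilon> \<le> frac (frakF_inv (real m))
         \<and> frac (frakF_inv (real m)) \<le> log phi (dotw b + tau b) + \<epsilon>) \<and>
    (log phi (dotw b) + \<epsilon> \<le> frac (frakF_inv (real m))
         \<and> frac (frakF_inv (real m)) \<le> log phi (dotw b + tau b) - \<epsilon> \<longrightarrow> LB s m = Some b)"
proof -
  define D where "D = dotw b"
  define \<tau> where "\<tau> = tau b"
  have D1: "D \<ge> 1" unfolding D_def using dotw_ge1 b by simp
  have tp: "\<tau> > 0" unfolding \<tau>_def by (rule tau_pos)
  define q where "q = phi powr \<epsilon>"
  have q1: "q > 1" unfolding q_def using phi_gt1 e powr_less_cancel_iff[of phi 0 \<epsilon>] by simp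
  have qi: "phi powr (-\<epsilon>) = 1 / q" unfolding q_def by (simp add: powr_minus divide_inverse)
  define \<eta> where "\<eta> = min (min (D * (1 - 1/q)) (D * (q - 1))) (min ((D + \<tau>) * (q - 1)) ((D + \<tau>) * (1 - 1/q)))"
  have \<eta>: "\<eta> > 0" unfolding \<eta>_def using D1 tp q1 by auto
  obtain n where n: "4 / \<eta> < phi ^ n" using real_arch_pow[OF phi_gt1] by blast
  show ?thesis
  proof (intro exI[of _ "max s n"] allI impI)
    fix m :: nat assume m: "0 < m" and hML: "max s n \<le> length (zeck m)"
    define L where "L = length (zeck m)"
    define x where "x = frakF_inv (real m)"
    define u where "u = frac x"
    define P where "P = phi ^ Suc L"
    define V where "V = phi powr u"
    have sL: "s \<le> L" and nL: "n \<le> L" using hML unfolding L_def by auto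
    have x1: "1 \<le> x" and fx: "frakF x = real m" using frakF_inv[of m] m unfolding x_def by auto
    have fl: "nat (floor x) = L" using frakF_inv_floor[OF m] unfolding x_def L_def by simp
    have Pp: "P > 0" unfolding P_def using phi_pos by simp
    have Pn: "phi ^ n \<le> P" unfolding P_def using phi_gt1 nL by (intro power_increasing) auto
    have "4 < \<eta> * phi ^ n" using n \<eta> by (simp add: field_simps)
    moreover have "\<eta> * phi ^ n \<le> \<eta> * P" using Pn \<eta> by (intro mult_left_mono) auto
    ultimately have P\<eta>: "P * \<eta> > 4" by (simp add: mult.commute)
    have "gg x = sqrt 5 * real m" using fx unfolding frakF_gg by (simp add: field_simps)
    hence em: "\<bar>sqrt 5 * real m - P * V\<bar> \<le> 1"
      using gg_split[OF x1] unfolding fl P_def V_def u_def by simp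
    define A where "A = fv (b @ replicate (L - s) 0)"
    have vA: "vl (b @ replicate (L - s) 0)" using b vl_replicate by (auto simp: vl_append)
    have eA: "\<bar>sqrt 5 * real A - P * D\<bar> \<le> 1"
      using fv_err1[OF vA] b sL unfolding A_def P_def D_def by simp
    have eT: "\<bar>sqrt 5 * real (TT b L) - P * \<tau>\<bar> \<le> 1"
      using TT_err[OF b(2) b(4) sL] unfolding P_def \<tau>_def .
    have char0: "LB s m = Some b \<longleftrightarrow> (A \<le> m \<and> m < A + TT b L)"
      using LB_char[OF b m] sL unfolding A_def L_def by simp
    have char: "LB s m = Some b \<longleftrightarrow> (real A \<le> real m \<and> real m < real A + real (TT b L))"
      unfolding char0 of_nat_add[symmetric] of_nat_le_iff of_nat_less_iff ..
    have s5: "sqrt 5 > 0" by simp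
    have Vp: "V = phi powr u" unfolding V_def ..
    have pa: "phi powr (log phi D) = D" using D1 phi_gt1 by simp
    have pg: "phi powr (log phi (D + \<tau>)) = D + \<tau>" using D1 tp phi_gt1 by simp
    have pw: "phi powr (a + \<epsilon>) = phi powr a * q" "phi powr (a - \<epsilon>) = phi powr a / q" for a
      unfolding q_def by (simp_all add: powr_add powr_diff)
    have q0: "q > 0" using q1 by simp
    show "(LB s m = Some b \<longrightarrow> log phi (dotw b) - \<epsilon> \<le> frac (frakF_inv (real m))
         \<and> frac (frakF_inv (real m)) \<le> log phi (dotw b + tau b) + \<epsilon>) \<and>
      (log phi (dotw b) + \<epsilon> \<le> frac (frakF_inv (real m))
         \<and> frac (frakF_inv (real m)) \<le> log phi (dotw b + tau b) - \<epsilon> \<longrightarrow> LB s m = Some b)"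
      unfolding D_def[symmetric] \<tau>_def[symmetric] x_def[symmetric] u_def[symmetric]
    proof (intro conjI impI)
      assume "LB s m = Some b"
      hence h: "real A \<le> real m" "real m < real A + real (TT b L)" using char by auto
      have "sqrt 5 * real A \<le> sqrt 5 * real m" using h s5 by simp
      hence "P * D - 2 \<le> P * V" using em eA by linarith
      moreover have "D * (1 - 1/q) \<ge> \<eta>" unfolding \<eta>_def by simp
      hence "P * (D * (1 - 1/q)) \<ge> P * \<eta>" using Pp by simp
      ultimately have "P * (D / q) < P * V" using P\<eta> by (simp add: algebra_simps)
      hence "D / q < V" using Pp mult_less_cancel_left_pos by blast
      hence "phi powr (log phi D - \<epsilon>) < phi powr u" unfolding pw pa Vp .
      thus "log phi D - \<epsilon> \<le> u" using phi_gt1 by simp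
      have "sqrt 5 * real m < sqrt 5 * real A + sqrt 5 * real (TT b L)" using h s5 by (simp flip: distrib_left)
      hence "P * V < P * (D + \<tau>) + 3" using em eA eT by (simp add: algebra_simps)
      moreover have "(D + \<tau>) * (q - 1) \<ge> \<eta>" unfolding \<eta>_def by simp
      hence "P * ((D + \<tau>) * (q - 1)) \<ge> P * \<eta>" using Pp by simp
      ultimately have "P * V < P * ((D + \<tau>) * q)" using P\<eta> by (simp add: algebra_simps)
      hence "V < (D + \<tau>) * q" using Pp mult_less_cancel_left_pos by blast
      hence "phi powr u < phi powr (log phi (D + \<tau>) + \<epsilon>)" unfolding pw pg Vp .
      thus "u \<le> log phi (D + \<tau>) + \<epsilon>" using phi_gt1 by simp
    next
      assume h: "log phi D + \<epsilon> \<le> u \<and> u \<le> log phi (D + \<tau>) - \<epsilon>"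
      hence "phi powr (log phi D + \<epsilon>) \<le> V" "V \<le> phi powr (log phi (D + \<tau>) - \<epsilon>)"
        unfolding Vp using phi_gt1 by simp_all
      hence V1: "D * q \<le> V" and V2: "V \<le> (D + \<tau>) / q" unfolding pw pa pg by simp_all
      have "D * (q - 1) \<ge> \<eta>" unfolding \<eta>_def by simp
      hence "P * (D * (q - 1)) \<ge> P * \<eta>" using Pp by simp
      moreover have "P * (D * q) \<le> P * V" using V1 Pp by (intro mult_left_mono) auto
      ultimately have "P * D + 4 < P * V" using P\<eta> by (simp add: algebra_simps)
      hence "sqrt 5 * real A < sqrt 5 * real m" using em eA by linarith
      hence c1: "real A \<le> real m" using s5 by simp
      have "(D + \<tau>) * (1 - 1/q) \<ge> \<eta>" unfolding \<eta>_def by simp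
      hence "P * ((D + \<tau>) * (1 - 1/q)) \<ge> P * \<eta>" using Pp by simp
      moreover have "P * V \<le> P * ((D + \<tau>) / q)" using V2 Pp by (intro mult_left_mono) auto
      ultimately have "P * V + 4 < P * (D + \<tau>)" using P\<eta> by (simp add: algebra_simps)
      hence "sqrt 5 * real m < sqrt 5 * real A + sqrt 5 * real (TT b L)" using em eA eT by (simp add: algebra_simps)
      hence c2: "real m < real A + real (TT b L)" using s5 by (simp flip: distrib_left)
      show "LB s m = Some b" using char c1 c2 by simp
    qed
  qed
qed



lemma K_ge:
  fixes K :: "nat \<Rightarrow> nat"
  assumes pos: "\<forall>k\<ge>1. 0 < K k" and incr: "\<forall>k\<ge>1. K k < K (Suc k)"
  shows "k \<ge> 1 \<Longrightarrow> K k \<ge> k"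
proof (induction k rule: dec_induct)
  case base thus ?case using pos by (simp add: Suc_le_eq)
next
  case (step k) thus ?case using incr by (simp add: Suc_le_eq le_less_trans)
qed

theorem theorem4p5:
  fixes K :: "nat \<Rightarrow> nat"
  assumes pos: "\<forall>k\<ge>1. 0 < K k"
    and incr: "\<forall>k\<ge>1. K k < K (Suc k)"
    and equi: "equidistributed_frac (\<lambda>n. frakF_inv (real (K n)))"
  shows "\<forall>s\<ge>2. \<forall>b\<in>FS s.
    (\<lambda>n. real (card {k\<in>{1..n}. LB s (K k) = Some b}) / real n)
      \<longlonglongrightarrow> log phi (dotw (btilde s b) / dotw b)"
proof (intro allI impI ballI)
  fix s b assume s: "2 \<le> s" and bF: "b \<in> FS s"
  have b: "vl b" "b \<noteq> []" "hd b = 1" "length b = s" using FS_props[OF bF] s by auto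
  have bt: "dotw (btilde s b) = dotw b + tau b" "dotw b + tau b \<le> phi" using btilde_val[OF bF s] by auto
  have D1: "dotw b \<ge> 1" using dotw_ge1 b by simp
  have tp: "tau b > 0" by (rule tau_pos)
  define \<alpha> where "\<alpha> = log phi (dotw b)"
  define \<gamma> where "\<gamma> = log phi (dotw b + tau b)"
  have ag: "0 \<le> \<alpha>" "\<alpha> \<le> \<gamma>" "\<gamma> \<le> 1"
    unfolding \<alpha>_def \<gamma>_def using D1 tp bt(2) phi_gt1 by auto
  have eq: "log phi (dotw (btilde s b) / dotw b) = \<gamma> - \<alpha>"
    unfolding bt(1) \<alpha>_def \<gamma>_def using D1 tp by (intro log_divide_pos) auto
  show "(\<lambda>n. real (card {k\<in>{1..n}. LB s (K k) = Some b}) / real n)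
      \<longlonglongrightarrow> log phi (dotw (btilde s b) / dotw b)"
    unfolding eq
  proof (rule count_lemma[OF equi ag])
    fix \<epsilon> :: real assume e: "\<epsilon> > 0"
    obtain M0 where M0: "\<forall>m>0. M0 \<le> length (zeck m) \<longrightarrow>
      (LB s m = Some b \<longrightarrow> \<alpha> - \<epsilon> \<le> frac (frakF_inv (real m)) \<and> frac (frakF_inv (real m)) \<le> \<gamma> + \<epsilon>) \<and>
      (\<alpha> + \<epsilon> \<le> frac (frakF_inv (real m)) \<and> frac (frakF_inv (real m)) \<le> \<gamma> - \<epsilon> \<longrightarrow> LB s m = Some b)"
      using window[OF b e] unfolding \<alpha>_def \<gamma>_def by blast
    show "\<exists>k0. \<forall>k\<ge>k0. (LB s (K k) = Some b \<longrightarrow> \<alpha> - \<epsilon> \<le> frac (frakF_inv (real (K k))) \<and> frac (frakF_inv (real (K k))) \<le> \<gamma> + \<epsilon>) \<and>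
        (\<alpha> + \<epsilon> \<le> frac (frakF_inv (real (K k))) \<and> frac (frakF_inv (real (K k))) \<le> \<gamma> - \<epsilon> \<longrightarrow> LB s (K k) = Some b)"
    proof (intro exI[of _ "max 1 (zF M0)"] allI impI)
      fix k assume k: "max 1 (zF M0) \<le> k"
      have Kk: "K k \<ge> k" using K_ge[OF pos incr, of k] k by simp
      have Kp: "0 < K k" using pos k by simp
      have "M0 \<le> length (zeck (K k))"
      proof (rule ccontr)
        assume "\<not> M0 \<le> length (zeck (K k))"
        hence "Suc (length (zeck (K k))) \<le> M0" by simp
        hence "zF (Suc (length (zeck (K k)))) \<le> zF M0" by (rule zF_mono)
        moreover have "K k < zF (Suc (length (zeck (K k))))" using is_zeck_len[OF zeck[OF Kp]] by simp
        ultimately show False using Kk k by simp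
      qed
      thus "(LB s (K k) = Some b \<longrightarrow> \<alpha> - \<epsilon> \<le> frac (frakF_inv (real (K k))) \<and> frac (frakF_inv (real (K k))) \<le> \<gamma> + \<epsilon>) \<and>
        (\<alpha> + \<epsilon> \<le> frac (frakF_inv (real (K k))) \<and> frac (frakF_inv (real (K k))) \<le> \<gamma> - \<epsilon> \<longrightarrow> LB s (K k) = Some b)"
        using M0 Kp by blast
    qed
  qed
qed


end
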